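(* Let $K=\langle \mathcal{T}_{strict},\mathcal{T}_{C_1},\ldots,\mathcal{T}_{C_k},\mathcal{A}\rangle$ be a ranked $\mathcal{EL}^{+}_{\bot}$ knowledge base over $\mathcal{C}=\{C_1,\ldots,C_k\}$, and let $\mathcal{M}=\langle \Delta,<_{C_1},\ldots,<_{C_k},<,\cdot^I\rangle$ be a (finite) concept-wise multipreference interpretation. Then the global preference relation $<$ is irreflexive, transitive and well-founded.
   Context: $\mathcal{EL}^{+}_{\bot}$ concepts are built by $C::=A\mid\top\mid\bot\mid C\sqcap C\mid \exists r.C$ with $A$ a concept name and $r$ a role name; interpretations $I=\langle\Delta,\cdot^I\rangle$ are as usual ($(\exists r.C)^I=\{x\mid \exists y,(x,y)\in r^I, y\in C^I\}$ etc.); a TBox contains concept inclusions $C\sqsubseteq D$ and role inclusions $r_1\circ\cdots\circ r_n\sqsubseteq r$, an ABox contains assertions $C(a)$, $r(a,b)$; $\models$ denotes standard $\mathcal{EL}^{+}_{\bot}$ entailment. A typicality inclusion has the form $\mathbf{T}(C)\sqsubseteq D$. A ranked knowledge base over a finite set $\mathcal{C}=\{C_1,\ldots,C_k\}$ of $\mathcal{EL}^{+}_{\bot}$ concepts is a tuple $K=\langle \mathcal{T}_{strict},\mathcal{T}_{C_1},\ldots,\mathcal{T}_{C_k},\mathcal{A}\rangle$ where $\mathcal{T}_{strict}$ is a set of concept and role inclusions, $\mathcal{A}$ an ABox, and each $\mathcal{T}_{C_j}$ a finite set of pairs $(\mathbf{T}(C_j)\sqsubseteq D, r)$ with $r$ a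 non-negative integer (its rank). Specificity: for $C_h,C_j\in\mathcal{C}$, $C_h\succ C_j$ iff $\mathcal{T}_{strict}\models C_h\sqsubseteq C_j$ and $\mathcal{T}_{strict}\not\models C_j\sqsubseteq C_h$. A (finite) concept-wise multipreference interpretation is a tuple $\langle\Delta,<_{C_1},\ldots,<_{C_k},<,\cdot^I\rangle$ where $\Delta$ is a finite non-empty domain; each $<_{C_i}$ is an irreflexive, transitive, well-founded and modular relation on $\Delta$ (modular: $x<_{C_i}y$ implies $x<_{C_i}z$ or $z<_{C_i}y$ for all $z$); $x\leq_{C_j}y$ means that $y<_{C_j}x$ does not hold; the global relation $<$ is defined by: $x<y$ iff (i) $x<_{C_i}y$ for some $C_i\in\mathcal{C}$, and (ii) for all $C_j\in\mathcal{C}$, either $x\leq_{C_j}y$ or there is $C_h\in\mathcal{C}$ with $C_h\succ C_j$ and $x<_{C_h}y$; and $\cdot^I$ is an $\mathcal{EL}^{+}_{\bot}$ interpretation function extended by $(\mathbf{T}(C))^I=\min_<(C^I)=\{u\in C^I\mid \nexists z\in C^I, z<u\}$. *)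

theory Defs
  imports Main
begin

datatype ('c, 'r) concept =
    CName 'c
  | Top
  | Bot
  | Conj "('c, 'r) concept" "('c, 'r) concept"
  | Ex 'r "('c, 'r) concept"

datatype ('c, 'r) tbox_axiom =
    CI "('c, 'r) concept" "('c, 'r) concept"
  | RI "'r list" 'r

datatype ('c, 'r, 'i) abox_assertion =
    CAss "('c, 'r) concept" 'i
  | RAss 'r 'i 'i

record ('c, 'r, 'd) el_interp =
  dom :: "'d set"
  cint :: "'c \<Rightarrow> 'd set"
  rint :: "'r \<Rightarrow> ('d \<times> 'd) set"

fun ext :: "('c, 'r, 'd) el_interp \<Rightarrow> ('c, 'r) concept \<Rightarrow> 'd set" where
  "ext I (CName A) = cint I A"
| "ext I Top = dom I"
| "ext I Bot = {}"
| "ext I (Conj C D) = ext I C \<inter> ext I D"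
| "ext I (Ex r C) = {x \<in> dom I. \<exists>y. (x, y) \<in> rint I r \<and> y \<in> ext I C}"

fun role_comp :: "('c, 'r, 'd) el_interp \<Rightarrow> 'r list \<Rightarrow> ('d \<times> 'd) set" where
  "role_comp I [] = Id_on (dom I)"
| "role_comp I (r # rs) = rint I r O role_comp I rs"

definition is_interp :: "('c, 'r, 'd) el_interp \<Rightarrow> bool" where
  "is_interp I \<longleftrightarrow> dom I \<noteq> {} \<and> (\<forall>A. cint I A \<subseteq> dom I) \<and> (\<forall>r. rint I r \<subseteq> dom I \<times> dom I)"

fun sat_ax :: "('c, 'r, 'd) el_interp \<Rightarrow> ('c, 'r) tbox_axiom \<Rightarrow> bool" where
  "sat_ax I (CI C D) \<longleftrightarrow> ext I C \<subseteq> ext I D"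
| "sat_ax I (RI rs r) \<longleftrightarrow> role_comp I rs \<subseteq> rint I r"

(* Interpretation domains are
   taken inside the countably infinite type nat (any nonempty subset); by
   Loewenheim-Skolem for this first-order fragment this coincides with standard
   entailment. *)
definition entails :: "('c, 'r) tbox_axiom set \<Rightarrow> ('c, 'r) concept \<Rightarrow> ('c, 'r) concept \<Rightarrow> bool" where
  "entails T C D \<longleftrightarrow>
     (\<forall>I :: ('c, 'r, nat) el_interp. is_interp I \<and> (\<forall>ax\<in>T. sat_ax I ax) \<longrightarrow> ext I C \<subseteq> ext I D)"

(* Typicality inclusion T(C_j) \<sqsubseteq> D with rank r is represented as (D, r);
   TC j is the module T_{C_j}. *)
definition ranked_kb ::
  "('c, 'r) concept list \<Rightarrow> ('c, 'r) tbox_axiom set \<Rightarrow> (nat \<Rightarrow> (('c, 'r) concept \<times> nat) set)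
   \<Rightarrow> ('c, 'r, 'i) abox_assertion set \<Rightarrow> bool" where
  "ranked_kb Cs Tstrict TC Abox \<longleftrightarrow> (\<forall>j < length Cs. finite (TC j))"

definition more_specific :: "('c, 'r) tbox_axiom set \<Rightarrow> ('c, 'r) concept \<Rightarrow> ('c, 'r) concept \<Rightarrow> bool" where
  "more_specific T Ch Cj \<longleftrightarrow> entails T Ch Cj \<and> \<not> entails T Cj Ch"

definition modular_on :: "'d set \<Rightarrow> ('d \<times> 'd) set \<Rightarrow> bool" where
  "modular_on \<Delta> R \<longleftrightarrow> (\<forall>x\<in>\<Delta>. \<forall>y\<in>\<Delta>. \<forall>z\<in>\<Delta>. (x, y) \<in> R \<longrightarrow> (x, z) \<in> R \<or> (z, y) \<in> R)"

(* prefs i is <_{C_i} (for i < length Cs), a relation on the domain. *)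
definition global_pref ::
  "('c, 'r) tbox_axiom set \<Rightarrow> ('c, 'r) concept list \<Rightarrow> 'd set \<Rightarrow> (nat \<Rightarrow> ('d \<times> 'd) set) \<Rightarrow> ('d \<times> 'd) set" where
  "global_pref T Cs \<Delta> prefs =
     {(x, y). x \<in> \<Delta> \<and> y \<in> \<Delta> \<and>
        (\<exists>i < length Cs. (x, y) \<in> prefs i) \<and>
        (\<forall>j < length Cs. (y, x) \<notin> prefs j \<or>
           (\<exists>h < length Cs. more_specific T (Cs ! h) (Cs ! j) \<and> (x, y) \<in> prefs h))}"

definition cw_interp ::
  "('c, 'r) concept list \<Rightarrow> (nat \<Rightarrow> ('d \<times> 'd) set) \<Rightarrow> ('c, 'r, 'd) el_interp \<Rightarrow> bool" where
  "cw_interp Cs prefs I \<longleftrightarrow>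
     is_interp I \<and> finite (dom I) \<and>
     (\<forall>i < length Cs. prefs i \<subseteq> dom I \<times> dom I \<and> irrefl (prefs i) \<and> trans (prefs i)
        \<and> wf (prefs i) \<and> modular_on (dom I) (prefs i))"

(* extension of typicality concepts: T(C)^I = min_<(C^I) *)
definition typ_ext :: "('d \<times> 'd) set \<Rightarrow> 'd set \<Rightarrow> 'd set" where
  "typ_ext L S = {u \<in> S. \<not> (\<exists>z\<in>S. (z, u) \<in> L)}"

end

theory Submission
  imports Defs
begin

lemma ms_irrefl: "\<not> more_specific T C C"
  by (simp add: more_specific_def)

lemma ms_trans: "more_specific T A B \<Longrightarrow> more_specific T B C \<Longrightarrow> more_specific T A C"
  unfolding more_specific_def entails_def by blast

definition specR :: "('c, 'r) tbox_axiom set \<Rightarrow> ('c, 'r) concept list \<Rightarrow> (nat \<times> nat) set" where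
  "specR T Cs = {(h, m). h < length Cs \<and> m < length Cs \<and> more_specific T (Cs ! h) (Cs ! m)}"

lemma wf_specR: "wf (specR T Cs)"
proof -
  have fin: "finite (specR T Cs)"
    by (rule finite_subset[of _ "{..<length Cs} \<times> {..<length Cs}"]) (auto simp: specR_def)
  have tr: "trans (specR T Cs)"
    unfolding trans_def specR_def using ms_trans by blast
  have "acyclic (specR T Cs)"
    unfolding acyclic_def trancl_id[OF tr] by (auto simp: specR_def ms_irrefl)
  then show ?thesis using wf_iff_acyclic_if_finite[OF fin] by blast
qed

lemma core:
  assumes cw: "cw_interp Cs prefs I"
    and xy: "(x, y) \<in> global_pref T Cs (dom I) prefs"
    and yz: "(y, z) \<in> global_pref T Cs (dom I) prefs"
    and m: "m < length Cs" "(x, y) \<in> prefs m \<or> (y, z) \<in> prefs m"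
    and mx: "\<And>h. h < length Cs \<Longrightarrow> more_specific T (Cs ! h) (Cs ! m) \<Longrightarrow>
               \<not> ((x, y) \<in> prefs h \<or> (y, z) \<in> prefs h)"
  shows "(x, z) \<in> prefs m"
proof -
  have dom: "x \<in> dom I" "y \<in> dom I" "z \<in> dom I"
    using xy yz unfolding global_pref_def by auto
  have mod: "modular_on (dom I) (prefs m)" using cw m unfolding cw_interp_def by blast
  show ?thesis
  proof (cases "(x, y) \<in> prefs m")
    case True
    then have "(x, z) \<in> prefs m \<or> (z, y) \<in> prefs m"
      using mod dom unfolding modular_on_def by blast
    moreover have "(z, y) \<notin> prefs m"
    proof
      assume "(z, y) \<in> prefs m"
      then obtain h where "h < length Cs" "more_specific T (Cs ! h) (Cs ! m)" "(y, z) \<in> prefs h"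
        using yz m(1) unfolding global_pref_def by blast
      then show False using mx by blast
    qed
    ultimately show ?thesis by blast
  next
    case False
    then have yzm: "(y, z) \<in> prefs m" using m by blast
    then have "(y, x) \<in> prefs m \<or> (x, z) \<in> prefs m"
      using mod dom unfolding modular_on_def by blast
    moreover have "(y, x) \<notin> prefs m"
    proof
      assume "(y, x) \<in> prefs m"
      then obtain h where "h < length Cs" "more_specific T (Cs ! h) (Cs ! m)" "(x, y) \<in> prefs h"
        using xy m(1) unfolding global_pref_def by blast
      then show False using mx by blast
    qed
    ultimately show ?thesis by blast
  qed
qed

lemma get_max:
  assumes "j \<in> Q"
  shows "\<exists>m\<in>Q. \<forall>h. (h, m) \<in> specR T Cs \<longrightarrow> h \<notin> Q"
  using wf_specR[of T Cs] assms unfolding wf_eq_minimal by blast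

lemma gp_trans:
  assumes cw: "cw_interp Cs prefs I"
  shows "trans (global_pref T Cs (dom I) prefs)"
proof (rule transI)
  fix x y z
  assume xy: "(x, y) \<in> global_pref T Cs (dom I) prefs"
    and yz: "(y, z) \<in> global_pref T Cs (dom I) prefs"
  have dom: "x \<in> dom I" "y \<in> dom I" "z \<in> dom I"
    using xy yz unfolding global_pref_def by auto
  obtain i where i: "i < length Cs" "(x, y) \<in> prefs i"
    using xy unfolding global_pref_def by blast
  let ?Q = "{h. h < length Cs \<and> ((x, y) \<in> prefs h \<or> (y, z) \<in> prefs h)}"
  obtain m where m: "m \<in> ?Q" "\<forall>h. (h, m) \<in> specR T Cs \<longrightarrow> h \<notin> ?Q"
    using get_max[of i ?Q] i by blast
  have "(x, z) \<in> prefs m"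
    by (rule core[OF cw xy yz]) (use m in \<open>auto simp: specR_def\<close>)
  then have c1: "\<exists>i < length Cs. (x, z) \<in> prefs i" using m by blast
  have c2: "(z, x) \<notin> prefs j \<or> (\<exists>h < length Cs. more_specific T (Cs ! h) (Cs ! j) \<and> (x, z) \<in> prefs h)"
    if j: "j < length Cs" for j
  proof (cases "(z, x) \<in> prefs j")
    case False then show ?thesis by blast
  next
    case True
    have mod: "modular_on (dom I) (prefs j)" using cw j unfolding cw_interp_def by blast
    have "(z, y) \<in> prefs j \<or> (y, x) \<in> prefs j"
      using True mod dom unfolding modular_on_def by blast
    then obtain h0 where h0: "h0 < length Cs" "more_specific T (Cs ! h0) (Cs ! j)"
      "(x, y) \<in> prefs h0 \<or> (y, z) \<in> prefs h0"
      using xy yz j unfolding global_pref_def by blast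
    let ?Q = "{h. h < length Cs \<and> more_specific T (Cs ! h) (Cs ! j) \<and> ((x, y) \<in> prefs h \<or> (y, z) \<in> prefs h)}"
    obtain m where m: "m \<in> ?Q" "\<forall>h. (h, m) \<in> specR T Cs \<longrightarrow> h \<notin> ?Q"
      using get_max[of h0 ?Q] h0 by blast
    have "(x, z) \<in> prefs m"
      by (rule core[OF cw xy yz]) (use m in \<open>auto simp: specR_def intro: ms_trans\<close>)
    then show ?thesis using m by blast
  qed
  show "(x, z) \<in> global_pref T Cs (dom I) prefs"
    unfolding global_pref_def using dom c1 c2 by blast
qed

theorem proposition1:
  fixes Cs :: "('c, 'r) concept list"
    and Tstrict :: "('c, 'r) tbox_axiom set"
    and TC :: "nat \<Rightarrow> (('c, 'r) concept \<times> nat) set"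
    and Abox :: "('c, 'r, 'i) abox_assertion set"
    and prefs :: "nat \<Rightarrow> ('d \<times> 'd) set"
    and I :: "('c, 'r, 'd) el_interp"
  assumes "ranked_kb Cs Tstrict TC Abox"
    and "cw_interp Cs prefs I"
  shows "irrefl (global_pref Tstrict Cs (dom I) prefs)
       \<and> trans (global_pref Tstrict Cs (dom I) prefs)
       \<and> wf (global_pref Tstrict Cs (dom I) prefs)"
proof -
  let ?G = "global_pref Tstrict Cs (dom I) prefs"
  have ir: "irrefl ?G"
    using assms(2) unfolding irrefl_def global_pref_def cw_interp_def by blast
  have tr: "trans ?G" using gp_trans[OF assms(2)] .
  have fin: "finite ?G"
    by (rule finite_subset[of _ "dom I \<times> dom I"])
       (use assms(2) in \<open>auto simp: global_pref_def cw_interp_def\<close>)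
  have "acyclic ?G"
    unfolding acyclic_def trancl_id[OF tr] using ir unfolding irrefl_def by blast
  then have "wf ?G" using wf_iff_acyclic_if_finite[OF fin] by blast
  then show ?thesis using ir tr by blast
qed

end
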